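(* Consider a single-item auction setting with a feature space $\mathcal{Z}$, $n$ buyers each with unit demand and a single seller with supply $\lambda > 0$ and cost $c = 0$. Conditioned on each feature vector $z$, the buyers' bids $b_1,\dots,b_n$ are independent with $b_i \sim F_i^z$. For a pricing policy $p:\mathcal{Z}\to\mathbb{R}$ the clearing loss is $$\ell^c(p,z,\mathbf{b},c) = \sum_{i=1}^n \max\{b_i - p(z),0\} + \lambda \max\{p(z)-c,0\}.$$ Let $p$ be the pricing policy minimizing the expected clearing loss (i.e., for each $z$, $p(z)$ solves $\sum_{i=1}^n (1-F_i^z(p(z))) = \lambda$). Let $b^{(1)} = \max_i b_i$. Then the expected social welfare $\mathbb{E}[{\sf SW}] = \mathbb{E}[b^{(1)}\,\mathbf{1}[b^{(1)} \ge p]]$ under $p$ is at least $(1-e^{-\lambda})\,\mathbb{E}[b^{(1)}]$, i.e., at least a $1-e^{-\lambda}$ fraction of the optimal social welfare, which is obtained by setting no reserve.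
   Context: $\mathbf{1}[\cdot]$ is the indicator function. Social welfare is the value of the highest bid when the item is sold and $0$ otherwise. *)

theory Defs
  imports "HOL-Probability.Probability"
begin

text \<open>Bid profiles of n buyers are functions b :: nat => real, restricted to indices i < n.\<close>

definition highest_bid :: "nat \<Rightarrow> (nat \<Rightarrow> real) \<Rightarrow> real" where
  "highest_bid n b = Max (b ` {..<n})"

definition social_welfare :: "nat \<Rightarrow> real \<Rightarrow> (nat \<Rightarrow> real) \<Rightarrow> real" where
  "social_welfare n pr b = (if highest_bid n b \<ge> pr then highest_bid n b else 0)"

definition clearing_loss :: "nat \<Rightarrow> real \<Rightarrow> real \<Rightarrow> (nat \<Rightarrow> real) \<Rightarrow> real \<Rightarrow> real" where
  "clearing_loss n lam pr b c = (\<Sum>i<n. max (b i - pr) 0) + lam * max (pr - c) 0"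

definition cdf_of :: "real measure \<Rightarrow> real \<Rightarrow> real" where
  "cdf_of M x = measure M {..x}"

end

theory Submission
  imports Defs
begin

lemma nn_integral_cmult_le:
  "c * integral\<^sup>N M f \<le> (\<integral>\<^sup>+ x. c * f x \<partial>M)"
  unfolding nn_integral_def SUP_mult_left_ennreal
proof (rule SUP_least)
  fix g assume g: "g \<in> {g. simple_function M g \<and> g \<le> f}"
  then have "c * integral\<^sup>S M g = integral\<^sup>S M (\<lambda>x. c * g x)" by simp
  also have "\<dots> \<le> (SUP g \<in> {g. simple_function M g \<and> g \<le> (\<lambda>x. c * f x)}. integral\<^sup>S M g)"
    using g by (intro SUP_upper) (auto simp: le_fun_def intro: mult_left_mono)
  finally show "c * integral\<^sup>S M g \<le> (SUP g \<in> {g. simple_function M g \<and> g \<le> (\<lambda>x. c * f x)}. integral\<^sup>S M g)" .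
qed

lemma key:
  fixes M :: "nat \<Rightarrow> real measure" and pr lam :: real
  assumes MP: "\<forall>i<n. prob_space (M i) \<and> sets (M i) = sets borel"
    and sumeq: "(\<Sum>i<n. 1 - cdf_of (M i) pr) = lam"
  shows "ennreal (1 - exp (- lam)) * (\<integral>\<^sup>+ b. ennreal (highest_bid n b) \<partial>(PiM {..<n} M))
         \<le> (\<integral>\<^sup>+ b. ennreal (social_welfare n pr b) \<partial>(PiM {..<n} M))"
proof -
  define M' where "M' i = (if i < n then M i else return borel (0::real))" for i
  have PiMeq: "PiM {..<n} M = PiM {..<n} M'"
    by (intro PiM_cong) (auto simp: M'_def)
  have M'prob: "prob_space (M' i)" for i
    using MP by (auto simp: M'_def prob_space_return)
  have M'sets: "sets (M' i) = sets borel" for i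
    using MP by (auto simp: M'_def)
  interpret product_prob_space M'
    by (auto simp: product_prob_space_def product_prob_space_axioms_def product_sigma_finite_def
        M'prob prob_space_imp_sigma_finite)
  interpret fps: finite_product_sigma_finite M' "{..<n}"
    by (auto simp: finite_product_sigma_finite_def finite_product_sigma_finite_axioms_def
        product_sigma_finite_axioms)
  define P where "P = PiM {..<n} M'"
  interpret Q: prob_space P unfolding P_def by (rule prob_space_PiM) (rule M'prob)
  have comp_meas: "(\<lambda>b. b i) \<in> borel_measurable P" if "i < n" for i
  proof -
    have "(\<lambda>b. b i) \<in> measurable P (M' i)"
      unfolding P_def using that by (intro measurable_component_singleton) auto
    then show ?thesis using M'sets measurable_cong_sets by blast
  qed
  have hb_meas: "highest_bid n \<in> borel_measurable P"
  proof -
    have "(\<lambda>b. Max ((\<lambda>i. b i) ` {..<n})) \<in> borel_measurable P"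
      by (rule borel_measurable_Max) (auto intro: comp_meas)
    then show ?thesis unfolding highest_bid_def by simp
  qed
  define c where "c = ennreal (1 - exp (- lam))"
  have c1: "c \<le> 1" unfolding c_def by (simp add: ennreal_le_1)
  show ?thesis
  proof (cases "pr \<le> 0")
    case True
    have "(\<integral>\<^sup>+ b. ennreal (social_welfare n pr b) \<partial>P) = (\<integral>\<^sup>+ b. ennreal (highest_bid n b) \<partial>P)"
      using True by (intro nn_integral_cong) (auto simp: social_welfare_def ennreal_neg)
    moreover have "c * (\<integral>\<^sup>+ b. ennreal (highest_bid n b) \<partial>P) \<le> 1 * (\<integral>\<^sup>+ b. ennreal (highest_bid n b) \<partial>P)"
      using c1 by (intro mult_right_mono) auto
    ultimately show ?thesis unfolding c_def P_def PiMeq by simp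
  next
    case False
    define A where "A = {b \<in> space P. pr \<le> highest_bid n b}"
    have A_sets: "A \<in> sets P" unfolding A_def using hb_meas by measurable
    define B where "B = PiE {..<n} (\<lambda>_. {..pr})"
    have B_sets: "B \<in> sets P" unfolding B_def P_def
      by (intro sets_PiM_I_finite) (auto simp: M'sets)
    have "space P - B \<subseteq> A"
    proof
      fix b assume b: "b \<in> space P - B"
      then have bext: "b \<in> extensional {..<n}" unfolding P_def by (auto simp: space_PiM PiE_def)
      have "pr \<le> highest_bid n b"
      proof (rule ccontr)
        assume "\<not> pr \<le> highest_bid n b"
        then have "\<forall>i<n. b i \<le> pr" unfolding highest_bid_def
          by (smt (verit) Max_ge finite_imageI finite_lessThan imageI lessThan_iff)
        then have "b \<in> B" using bext unfolding B_def by (auto simp: PiE_def)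
        then show False using b by auto
      qed
      then show "b \<in> A" using b unfolding A_def by auto
    qed
    then have "Q.prob (space P - B) \<le> Q.prob A"
      using A_sets by (intro Q.finite_measure_mono) auto
    moreover have "Q.prob (space P - B) = 1 - Q.prob B"
      using B_sets Q.prob_compl by blast
    moreover have "Q.prob B = (\<Prod>i<n. cdf_of (M i) pr)"
    proof -
      have "emeasure P B = (\<Prod>i<n. emeasure (M' i) {..pr})"
        unfolding P_def B_def by (intro fps.measure_times) (auto simp: M'sets)
      also have "\<dots> = (\<Prod>i<n. ennreal (cdf_of (M i) pr))"
      proof (intro prod.cong refl)
        fix i assume "i \<in> {..<n}"
        then have "M' i = M i" by (simp add: M'_def)
        then show "emeasure (M' i) {..pr} = ennreal (cdf_of (M i) pr)"
          using M.emeasure_eq_measure[of i "{..pr}"] by (simp add: cdf_of_def)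
      qed
      also have "\<dots> = ennreal (\<Prod>i<n. cdf_of (M i) pr)"
        by (intro prod_ennreal) (auto simp: cdf_of_def)
      finally show ?thesis
        by (simp add: Q.emeasure_eq_measure cdf_of_def prod_nonneg)
    qed
    moreover have "(\<Prod>i<n. cdf_of (M i) pr) \<le> exp (- lam)"
    proof -
      have "(\<Prod>i<n. cdf_of (M i) pr) \<le> (\<Prod>i<n. exp (- (1 - cdf_of (M i) pr)))"
      proof (intro prod_mono conjI)
        fix i assume "i \<in> {..<n}"
        show "0 \<le> cdf_of (M i) pr" by (simp add: cdf_of_def)
        show "cdf_of (M i) pr \<le> exp (- (1 - cdf_of (M i) pr))"
          using exp_ge_add_one_self[of "cdf_of (M i) pr - 1"] by simp
      qed
      also have "\<dots> = exp (- lam)"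
      proof -
        have "(\<Sum>i<n. cdf_of (M i) pr - 1) = - lam"
          unfolding sumeq[symmetric] by (simp add: sum_negf[symmetric])
        then show ?thesis by (simp add: exp_sum[symmetric])
      qed
      finally show ?thesis .
    qed
    ultimately have probA: "1 - exp (- lam) \<le> Q.prob A" by linarith
    have cA: "c \<le> emeasure P A"
      unfolding c_def Q.emeasure_eq_measure using probA by (simp add: ennreal_leI)
    have SWeq: "(\<integral>\<^sup>+ b. ennreal (social_welfare n pr b) \<partial>P)
        = (\<integral>\<^sup>+ b. ennreal pr * indicator A b + ennreal (highest_bid n b - pr) \<partial>P)"
      using False
      by (intro nn_integral_cong) (auto simp: social_welfare_def A_def indicator_def ennreal_plus[symmetric] ennreal_neg)
    also have "\<dots> = ennreal pr * emeasure P A + (\<integral>\<^sup>+ b. ennreal (highest_bid n b - pr) \<partial>P)"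
      using A_sets hb_meas by (subst nn_integral_add) (auto simp: nn_integral_cmult_indicator)
    finally have SW: "(\<integral>\<^sup>+ b. ennreal (social_welfare n pr b) \<partial>P)
        = ennreal pr * emeasure P A + (\<integral>\<^sup>+ b. ennreal (highest_bid n b - pr) \<partial>P)" .
    have "(\<integral>\<^sup>+ b. ennreal (highest_bid n b) \<partial>P) \<le> (\<integral>\<^sup>+ b. ennreal pr + ennreal (highest_bid n b - pr) \<partial>P)"
    proof (intro nn_integral_mono)
      fix b
      show "ennreal (highest_bid n b) \<le> ennreal pr + ennreal (highest_bid n b - pr)"
        using False
        by (cases "highest_bid n b \<le> pr") (auto simp: ennreal_plus[symmetric] ennreal_neg ennreal_leI
            intro: order_trans[OF _ add_increasing2])
    qed
    also have "\<dots> = ennreal pr + (\<integral>\<^sup>+ b. ennreal (highest_bid n b - pr) \<partial>P)"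
      using hb_meas by (subst nn_integral_add) (auto simp: Q.emeasure_space_1)
    finally have HB: "(\<integral>\<^sup>+ b. ennreal (highest_bid n b) \<partial>P) \<le> ennreal pr + (\<integral>\<^sup>+ b. ennreal (highest_bid n b - pr) \<partial>P)" .
    have "c * (\<integral>\<^sup>+ b. ennreal (highest_bid n b) \<partial>P) \<le> c * (ennreal pr + (\<integral>\<^sup>+ b. ennreal (highest_bid n b - pr) \<partial>P))"
      using HB by (rule mult_left_mono) simp
    also have "\<dots> = c * ennreal pr + c * (\<integral>\<^sup>+ b. ennreal (highest_bid n b - pr) \<partial>P)"
      by (simp add: distrib_left)
    also have "\<dots> \<le> ennreal pr * emeasure P A + 1 * (\<integral>\<^sup>+ b. ennreal (highest_bid n b - pr) \<partial>P)"
    proof (intro add_mono)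
      show "c * ennreal pr \<le> ennreal pr * emeasure P A"
        using cA by (subst mult.commute) (rule mult_left_mono, auto)
      show "c * (\<integral>\<^sup>+ b. ennreal (highest_bid n b - pr) \<partial>P) \<le> 1 * (\<integral>\<^sup>+ b. ennreal (highest_bid n b - pr) \<partial>P)"
        using c1 by (rule mult_right_mono) auto
    qed
    finally have "c * (\<integral>\<^sup>+ b. ennreal (highest_bid n b) \<partial>P) \<le> (\<integral>\<^sup>+ b. ennreal (social_welfare n pr b) \<partial>P)"
      unfolding SW by simp
    then show ?thesis unfolding c_def P_def PiMeq .
  qed
qed

theorem mainTheorem3:
  fixes D :: "'z measure" and F :: "'z \<Rightarrow> nat \<Rightarrow> real measure"
    and n :: nat and lam :: real and p :: "'z \<Rightarrow> real"
  assumes "prob_space D"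
    and "n \<ge> 1"
    and "lam > 0"
    and "\<forall>z\<in>space D. \<forall>i<n. prob_space (F z i) \<and> sets (F z i) = sets borel"
    and "\<forall>z\<in>space D. \<forall>i<n. AE x in F z i. x \<ge> 0"
    and "\<forall>z\<in>space D. (\<Sum>i<n. 1 - cdf_of (F z i) (p z)) = lam"
  shows "(\<integral>\<^sup>+ z. (\<integral>\<^sup>+ b. ennreal (social_welfare n (p z) b) \<partial>(PiM {..<n} (F z))) \<partial>D)
           \<ge> ennreal (1 - exp (- lam)) *
             (\<integral>\<^sup>+ z. (\<integral>\<^sup>+ b. ennreal (highest_bid n b) \<partial>(PiM {..<n} (F z))) \<partial>D)"
proof -
  have "ennreal (1 - exp (- lam)) *
             (\<integral>\<^sup>+ z. (\<integral>\<^sup>+ b. ennreal (highest_bid n b) \<partial>(PiM {..<n} (F z))) \<partial>D)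
      \<le> (\<integral>\<^sup>+ z. ennreal (1 - exp (- lam)) * (\<integral>\<^sup>+ b. ennreal (highest_bid n b) \<partial>(PiM {..<n} (F z))) \<partial>D)"
    by (rule nn_integral_cmult_le)
  also have "\<dots> \<le> (\<integral>\<^sup>+ z. (\<integral>\<^sup>+ b. ennreal (social_welfare n (p z) b) \<partial>(PiM {..<n} (F z))) \<partial>D)"
    using assms(4,6) by (intro nn_integral_mono key) auto
  finally show ?thesis .
qed

end
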